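(* Fix $r\ge1$ and define $R_1=\{\tilde\mu:|\tilde\mu|\le r/\sin(\pi/10)\}$ and $R_2=\{\tilde\mu:\mathrm{Re}(\tilde\mu)\in[r/\tan(\pi/10),\epsilon^{-1/2}],\ \mathrm{Im}(\tilde\mu)\in[-2,2]\}$. Then $R_1$ is compact and $R_1\cup R_2$ contains $\tilde{\mathcal C}_\epsilon$. Moreover $g_\epsilon(\tilde\mu)\to e^{-\tilde\mu/2}$ as $\epsilon\to0$, uniformly in $\tilde\mu\in R_1$; and there exist $\epsilon_0>0$ and a constant $c>0$ such that for all $\epsilon<\epsilon_0$ and all $\tilde\mu\in R_2$, $$|g_\epsilon(\tilde\mu)|\le|e^{-\tilde\mu/2}|\,|e^{-c\epsilon^{1/2}\tilde\mu^2}|.$$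
   Context: $\tau=\frac{1-\epsilon^{1/2}}{1+\epsilon^{1/2}}$ and $g_\epsilon(\tilde\mu)=\prod_{k=0}^\infty(1-\epsilon^{1/2}\tilde\mu\tau^k)$. $\tilde{\mathcal C}_\epsilon=\{e^{i\theta}:\pi/2\le\theta\le3\pi/2\}\cup\{x\pm i:0<x\le\epsilon^{-1/2}-1\}\cup\{\epsilon^{-1/2}-1+iy:-1<y<1\}$. *)

theory Defs
  imports "HOL-Analysis.Analysis"
begin

definition tau :: "real \<Rightarrow> real" where
  "tau \<epsilon> = (1 - sqrt \<epsilon>) / (1 + sqrt \<epsilon>)"

definition g :: "real \<Rightarrow> complex \<Rightarrow> complex" where
  "g \<epsilon> \<mu> = (\<Prod>k. 1 - complex_of_real (sqrt \<epsilon>) * \<mu> * complex_of_real (tau \<epsilon> ^ k))"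

definition Ctilde :: "real \<Rightarrow> complex set" where
  "Ctilde \<epsilon> =
     {cis \<theta> | \<theta>. pi/2 \<le> \<theta> \<and> \<theta> \<le> 3*pi/2}
   \<union> {Complex x s | x s. (s = 1 \<or> s = -1) \<and> 0 < x \<and> x \<le> 1 / sqrt \<epsilon> - 1}
   \<union> {Complex (1 / sqrt \<epsilon> - 1) y | y. -1 < y \<and> y < 1}"

definition R1 :: "real \<Rightarrow> complex set" where
  "R1 r = {\<mu>. cmod \<mu> \<le> r / sin (pi/10)}"

definition R2 :: "real \<Rightarrow> real \<Rightarrow> complex set" where
  "R2 r \<epsilon> = {\<mu>. r / tan (pi/10) \<le> Re \<mu> \<and> Re \<mu> \<le> 1 / sqrt \<epsilon>
                   \<and> -2 \<le> Im \<mu> \<and> Im \<mu> \<le> 2}"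

end

theory Submission
  imports Defs
begin


lemma trig_facts:
  "0 < sin (pi/10)" "sin (pi/10) \<le> 1" "4/5 \<le> cos (pi/10)" "sin (pi/10) \<le> 2/5"
proof -
  show s0: "0 < sin (pi/10)" by (rule sin_gt_zero) (auto simp: pi_gt_zero)
  show "sin (pi/10) \<le> 1" by simp
  have "sin (pi/10) \<le> pi/10" by (rule sin_x_le_x) (simp add: pi_ge_zero)
  also have "\<dots> \<le> 2/5" using pi_less_4 by simp
  finally show s1: "sin (pi/10) \<le> 2/5" .
  have c0: "0 \<le> cos (pi/10)" by (rule cos_ge_zero) (auto simp: pi_ge_zero)
  have "(sin (pi/10))^2 \<le> (2/5)^2" using s0 s1 by (intro power_mono) auto
  then have h1: "(sin (pi/10))^2 \<le> 4/25" by (simp add: power_divide)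
  have h2: "(cos (pi/10))^2 = 1 - (sin (pi/10))^2" by (rule cos_squared_eq)
  have h3: "(4/5::real)^2 = 16/25" by (simp add: power_divide)
  have "(cos (pi/10))^2 \<ge> (4/5)^2" unfolding h3 using h1 h2 by linarith
  then show "4/5 \<le> cos (pi/10)" using c0 by (meson power2_le_imp_le)
qed

lemma cot_ge2: "2 \<le> cos (pi/10) / sin (pi/10)"
  using trig_facts by (simp add: le_divide_eq)

lemma psi_le: fixes a :: real assumes "0 \<le> a" "a \<le> 1" shows "(1 - a) * exp (a + a^2/2) \<le> 1"
proof -
  have "(\<lambda>x. (1 - x) * exp (x + x^2/2)) a \<le> (\<lambda>x. (1 - x) * exp (x + x^2/2)) 0"
  proof (rule DERIV_nonpos_imp_nonincreasing[OF assms(1)])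
    fix x :: real assume "0 \<le> x" "x \<le> a"
    have "DERIV (\<lambda>x. (1 - x) * exp (x + x^2/2)) x :> (-1) * exp (x + x^2/2) + (1 - x) * (exp (x + x^2/2) * (1 + x))"
      by (rule derivative_eq_intros refl | simp)+
    moreover have "(-1) * exp (x + x^2/2) + (1 - x) * (exp (x + x^2/2) * (1 + x)) = - (x^2 * exp (x + x^2/2))"
      by (simp add: algebra_simps power2_eq_square)
    ultimately show "\<exists>y. DERIV (\<lambda>x. (1 - x) * exp (x + x^2/2)) x :> y \<and> y \<le> 0"
      by (intro exI[of _ "- (x^2 * exp (x + x^2/2))"]) auto
  qed
  then show ?thesis by simp
qed


lemma term_bound:
  fixes a b :: real
  assumes a: "0 \<le> a" "a \<le> 1" and b: "b^2 \<le> 1/2500"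
  shows "(1 - a)^2 + b^2 \<le> exp (-2*a - a^2/2 + 2*b^2)"
proof -
  define E where "E = exp (-2*a - a^2/2)"
  have Epos: "0 < E" by (simp add: E_def)
  have p: "(1 - a) * exp (a + a^2/2) \<le> 1" by (rule psi_le[OF a])
  have p0: "0 \<le> (1 - a) * exp (a + a^2/2)" using a by simp
  have "(1-a)^2 * exp (2*a + a^2) = ((1 - a) * exp (a + a^2/2))^2"
  proof -
    have "exp (2*a + a^2) = (exp (a + a^2/2))^2"
      by (simp add: power2_eq_square exp_add[symmetric])
    then show ?thesis by (simp add: power_mult_distrib)
  qed
  also have "\<dots> \<le> 1" using p p0 by (simp add: power_le_one)
  finally have q: "(1-a)^2 * exp (2*a + a^2) \<le> 1" .
  have q2: "(1-a)^2 \<le> E * exp (-(a^2/2))"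
  proof -
    have "E * exp (-(a^2/2)) = exp (-(2*a + a^2))" by (simp add: E_def exp_add[symmetric])
    also have "\<dots> = inverse (exp (2*a + a^2))" by (rule exp_minus)
    finally have eq: "E * exp (-(a^2/2)) = 1 / exp (2*a + a^2)" by (simp add: inverse_eq_divide)
    have X: "0 < exp (2*a+a^2)" by simp
    from q X have "(1-a)^2 \<le> 1 / exp (2*a+a^2)" by (simp add: le_divide_eq)
    then show ?thesis using eq by simp
  qed
  have e2: "1 + 2*b^2 \<le> exp (2*b^2)" by (rule exp_ge_add_one_self)
  have b0: "0 \<le> b^2" by simp
  have key: "(1 - a)^2 + b^2 \<le> E * (1 + 2*b^2)"
  proof (cases "a \<le> 1/5")
    case True
    have "1 + (-2*a - a^2/2) \<le> E" unfolding E_def by (rule exp_ge_add_one_self)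
    moreover have "a^2 \<le> (1/5)^2" using True a by (intro power_mono) auto
    ultimately have E2: "1/2 \<le> E" using True by (simp add: power2_eq_square)
    have "exp (-(a^2/2)) \<le> 1" by simp
    then have "E * exp (-(a^2/2)) \<le> E" using Epos by (simp add: mult_left_le)
    then have "(1-a)^2 \<le> E" using q2 by linarith
    moreover have "b^2 \<le> 2 * E * b^2" using E2 b0 mult_right_mono[OF E2 b0] by linarith
    ultimately show ?thesis by (simp add: algebra_simps)
  next
    case False
    have "(1/5)^2 \<le> a^2" using False a by (intro power_mono) auto
    then have "exp (-(a^2/2)) \<le> exp (-(1/50))" by (simp add: power2_eq_square)
    also have "exp (-(1/50)) = inverse (exp (1/50::real))" by (rule exp_minus)
    also have "\<dots> \<le> inverse (1 + 1/50)" using exp_ge_add_one_self[of "1/50::real"]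
      by (intro le_imp_inverse_le) auto
    finally have h1: "exp (-(a^2/2)) \<le> 50/51" by simp
    have h2: "(1-a)^2 \<le> E * (50/51)" using q2 mult_left_mono[OF h1, of E] Epos by linarith
    have "exp (-1/2::real) \<ge> 1/2" using exp_ge_add_one_self[of "-1/2::real"] by simp
    then have "exp (-1/2::real)^5 \<ge> (1/2)^5" by (rule power_mono) simp
    also have "exp (-1/2::real)^5 = exp (-5/2)" by (simp add: exp_of_nat_mult[symmetric])
    finally have h3: "exp (-5/2::real) \<ge> 1/32" by (simp add: power_divide)
    have "a^2 \<le> 1" using a by (simp add: power_le_one)
    then have "exp (-5/2) \<le> E" unfolding E_def using a by simp
    then have E32: "E \<ge> 1/32" using h3 by simp
    then have "b^2 \<le> E / 51" using b by simp
    moreover have "0 \<le> E * b^2" using Epos by simp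
    ultimately show ?thesis using h2 by (simp add: algebra_simps)
  qed
  also have "\<dots> \<le> E * exp (2*b^2)" using e2 Epos by simp
  also have "\<dots> = exp (-2*a - a^2/2 + 2*b^2)" by (simp add: E_def exp_add[symmetric])
  finally show ?thesis .
qed



lemma geo1: assumes "0 < s" "s < (1::real)"
  shows "(\<lambda>k. ((1-s)/(1+s))^k) sums ((1+s)/(2* s))"
proof -
  have "norm ((1-s)/(1+s)) < 1" using assms by (simp add: abs_less_iff field_simps)
  from geometric_sums[OF this] have "(\<lambda>k. ((1-s)/(1+s))^k) sums (1 / (1 - (1-s)/(1+s)))" .
  moreover have "1 / (1 - (1-s)/(1+s)) = (1+s)/(2* s)" using assms by (simp add: field_simps)
  ultimately show ?thesis by simp
qed

lemma geo2: assumes "0 < s" "s < (1::real)"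
  shows "(\<lambda>k. (((1-s)/(1+s))^k)^2) sums ((1+s)^2/(4* s))"
proof -
  have t0: "0 \<le> (1-s)/(1+s)" and t1: "(1-s)/(1+s) < 1" using assms by (auto simp: field_simps)
  have tt: "((1-s)/(1+s))^2 < 1" unfolding abs_square_less_1 abs_of_nonneg[OF t0] by (rule t1)
  have "norm (((1-s)/(1+s))^2) < 1" using tt by (simp only: real_norm_def abs_power2)
  from geometric_sums[OF this] have "(\<lambda>k. (((1-s)/(1+s))^2)^k) sums (1 / (1 - ((1-s)/(1+s))^2))" .
  moreover have "1 / (1 - ((1-s)/(1+s))^2) = (1+s)^2/(4* s)"
  proof -
    have p: "1 + s \<noteq> 0" using assms by simp
    have "1 - ((1-s)/(1+s))^2 = ((1+s)^2 - (1-s)^2) / (1+s)^2"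
      using p by (simp add: power_divide field_simps)
    also have "(1+s)^2 - (1-s)^2 = 4 * s" by (simp add: power2_eq_square algebra_simps)
    finally show ?thesis by simp
  qed
  ultimately show ?thesis by (simp add: power_mult[symmetric] mult.commute)
qed




lemma g_approx:
  fixes \<epsilon> M :: real and \<mu> :: complex
  assumes e: "0 < \<epsilon>" "sqrt \<epsilon> \<le> 1/2" "sqrt \<epsilon> * M \<le> 1/2" and mu: "cmod \<mu> \<le> M"
  shows "\<exists>z. g \<epsilon> \<mu> = exp (- \<mu> / 2 + z) \<and> cmod z \<le> sqrt \<epsilon> * (M/2 + 2 * M^2)"
proof -
  define s where "s = sqrt \<epsilon>"
  define t where "t = tau \<epsilon>"
  have s0: "0 < s" and s1: "s \<le> 1/2" using e by (auto simp: s_def)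
  have t_def': "t = (1-s)/(1+s)" by (simp add: t_def s_def tau_def)
  have t0: "0 \<le> t" and t1: "t \<le> 1" using s0 s1 by (auto simp: t_def' field_simps)
  have M0: "0 \<le> M" using mu norm_ge_zero order_trans by blast
  define w where "w k = complex_of_real s * \<mu> * complex_of_real (t ^ k)" for k
  have g_eq: "g \<epsilon> \<mu> = (\<Prod>k. 1 - w k)" by (simp add: g_def w_def s_def t_def)
  have nw: "norm (w k) = s * cmod \<mu> * t^k" for k
    using s0 t0 by (simp add: w_def norm_mult norm_power)
  have nw_le: "norm (w k) \<le> 1/2" for k
  proof -
    have "s * cmod \<mu> * t^k \<le> s * M * 1"
      using s0 mu t0 t1 M0 by (intro mult_mono) (auto simp: power_le_one)
    then show ?thesis using e(3) nw by (simp add: s_def)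
  qed
  define E where "E k = ln (1 - w k) + w k" for k
  define B where "B k = 2 * (s * cmod \<mu>)^2 * (t^k)^2" for k
  have EB: "norm (E k) \<le> B k" for k
  proof -
    have "norm (ln (1 + (- w k)) - (- w k)) \<le> norm (- w k)^2 / (1 - norm (- w k))"
      using nw_le[of k] by (intro Ln_approx_linear) simp
    also have "\<dots> = norm (w k)^2 / (1 - norm (w k))" by simp
    also have "\<dots> \<le> norm (w k)^2 / (1/2)" using nw_le[of k]
      by (intro divide_left_mono) auto
    also have "\<dots> = B k" by (simp add: B_def nw power_mult_distrib)
    finally show ?thesis by (simp add: E_def)
  qed
  have Bsums: "B sums (2 * (s * cmod \<mu>)^2 * ((1+s)^2/(4 * s)))"
    unfolding B_def using geo2[of s] s0 s1 t_def' by (intro sums_mult) simp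
  have Bsum: "summable B" using Bsums by (rule sums_summable)
  have Esum: "summable E" by (rule summable_comparison_test'[OF Bsum, of 0]) (use EB in auto)
  have Ebound: "norm (suminf E) \<le> suminf B" by (rule norm_suminf_le[OF EB Bsum])
  have "suminf B = 2 * (s * cmod \<mu>)^2 * ((1+s)^2/(4 * s))" by (rule sums_unique[OF Bsums, symmetric])
  also have "\<dots> = s * (cmod \<mu>)^2 * (1+s)^2 / 2"
    using s0 by (simp add: field_simps power2_eq_square)
  also have "\<dots> \<le> s * M^2 * (9/4) / 2"
  proof -
    have "(cmod \<mu>)^2 \<le> M^2" using mu by (intro power_mono) auto
    moreover have "(1+s)^2 \<le> (3/2)^2" using s0 s1 by (intro power_mono) auto
    ultimately have "(cmod \<mu>)^2 * (1+s)^2 \<le> M^2 * (9/4)"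
      by (intro mult_mono) (auto simp: power2_eq_square)
    then show ?thesis using s0 by (simp add: mult.assoc mult_left_mono divide_right_mono)
  qed
  finally have "suminf B \<le> s * M^2 * (9/4) / 2" .
  moreover have "0 \<le> s * M^2" using s0 by simp
  ultimately have Eb: "norm (suminf E) \<le> 2 * s * M^2" using Ebound by linarith
  have wsums: "w sums (\<mu> * (1+s)/2)"
  proof -
    have "(\<lambda>k. t^k) sums ((1+s)/(2 * s))"
      using geo1[of s] s0 s1 t_def' by simp
    then have "(\<lambda>k. complex_of_real (t^k)) sums complex_of_real ((1+s)/(2 * s))"
      by (rule sums_of_real_iff[THEN iffD2])
    from sums_mult[OF this, of "complex_of_real s * \<mu>"]
    have A: "(\<lambda>k. complex_of_real s * \<mu> * complex_of_real (t^k)) sums (complex_of_real s * \<mu> * complex_of_real ((1+s)/(2 * s)))" .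
    have eq: "complex_of_real s * \<mu> * complex_of_real ((1+s)/(2 * s)) = \<mu> * (1+s)/2"
      using s0 by (simp add: field_simps)
    have wfun: "w = (\<lambda>k. complex_of_real s * \<mu> * complex_of_real (t^k))"
      by (simp add: w_def fun_eq_iff)
    show ?thesis using A unfolding wfun eq by assumption
  qed
  define L where "L = (\<lambda>k. ln (1 - w k))"
  have Lsums: "L sums (suminf E - \<mu> * (1+s)/2)"
  proof -
    have "(\<lambda>k. E k - w k) sums (suminf E - \<mu> * (1+s)/2)"
      by (intro sums_diff summable_sums Esum wsums)
    then show ?thesis by (simp add: E_def L_def)
  qed
  have nz: "1 - w k \<noteq> 0" for k
  proof
    assume "1 - w k = 0"
    then have "w k = 1" by simp
    with nw_le[of k] show False by simp
  qed
  have "(\<lambda>k. exp (L k)) = (\<lambda>k. 1 - w k)"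
    by (rule ext) (simp add: L_def exp_Ln[OF nz])
  then have "(\<Prod>k. 1 - w k) = (\<Prod>k. exp (L k))" by simp
  also have "\<dots> = exp (suminf L)" by (rule prodinf_exp) (rule sums_summable[OF Lsums])
  also have "suminf L = suminf E - \<mu> * (1+s)/2" by (rule sums_unique[OF Lsums, symmetric])
  finally have P: "(\<Prod>k. 1 - w k) = exp (suminf E - \<mu> * (1+s)/2)" .
  have eqn: "- \<mu> / 2 + (suminf E - complex_of_real s * \<mu> / 2) = suminf E - \<mu> * (1 + complex_of_real s) / 2"
    by (simp add: field_simps)
  have "g \<epsilon> \<mu> = exp (- \<mu> / 2 + (suminf E - complex_of_real s * \<mu> / 2))"
    unfolding eqn using g_eq P by simp
  moreover have "cmod (suminf E - complex_of_real s * \<mu> / 2) \<le> s * (M/2 + 2 * M^2)"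
  proof -
    have "cmod (suminf E - complex_of_real s * \<mu> / 2) \<le> cmod (suminf E) + cmod (complex_of_real s * \<mu> / 2)"
      by (rule norm_triangle_ineq4)
    also have "cmod (complex_of_real s * \<mu> / 2) = s * cmod \<mu> / 2" using s0 by (simp add: norm_mult)
    also have "\<dots> \<le> s * M / 2" using s0 mu by simp
    finally show ?thesis using Eb by (simp add: algebra_simps)
  qed
  ultimately show ?thesis by (auto simp: s_def)
qed




lemma g_R2:
  fixes \<epsilon> :: real and \<mu> :: complex
  assumes e: "0 < \<epsilon>" "sqrt \<epsilon> \<le> 1/100"
    and x: "0 \<le> Re \<mu>" "Re \<mu> \<le> 1 / sqrt \<epsilon>" and y: "\<bar>Im \<mu>\<bar> \<le> 2"
  shows "cmod (g \<epsilon> \<mu>) \<le> exp (- (sqrt \<epsilon> * Re \<mu>) * ((1 + sqrt \<epsilon>)/(2 * sqrt \<epsilon>))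
             + ((sqrt \<epsilon> * Im \<mu>)^2 - (sqrt \<epsilon> * Re \<mu>)^2/4) * ((1 + sqrt \<epsilon>)^2/(4 * sqrt \<epsilon>)))"
proof -
  define s where "s = sqrt \<epsilon>"
  define t where "t = tau \<epsilon>"
  define x where "x = Re \<mu>"
  define y where "y = Im \<mu>"
  have s0: "0 < s" and s1: "s \<le> 1/100" using e by (auto simp: s_def)
  have t_def': "t = (1-s)/(1+s)" by (simp add: t_def s_def tau_def)
  have t0: "0 \<le> t" and t1: "t < 1" using s0 s1 by (auto simp: t_def' field_simps)
  have x0: "0 \<le> x" and sx: "s * x \<le> 1" using x s0 by (auto simp: x_def s_def field_simps)
  have y2: "y^2 \<le> 4" using y by (simp add: y_def abs_le_square_iff[of _ 2, simplified] power2_eq_square)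
  define w where "w k = complex_of_real s * \<mu> * complex_of_real (t ^ k)" for k
  have g_eq: "g \<epsilon> \<mu> = (\<Prod>k. 1 - w k)" by (simp add: g_def w_def s_def t_def)
  define c1 where "c1 = - (s * x)"
  define c2 where "c2 = (s * y)^2 - (s * x)^2/4"
  define \<phi> where "\<phi> k = c1 * t^k + c2 * (t^k)^2" for k
  have tk: "0 \<le> t^k" "t^k \<le> 1" for k using t0 t1 by (auto simp: power_le_one)
  have termb: "cmod (1 - w k) \<le> exp (\<phi> k)" for k
  proof -
    define a where "a = s * x * t^k"
    define b where "b = s * y * t^k"
    have ReIm: "Re (1 - w k) = 1 - a" "Im (1 - w k) = - b"
      by (simp_all add: w_def a_def b_def x_def y_def)
    have a0: "0 \<le> a" using s0 x0 tk[of k] by (simp add: a_def)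
    have a1: "a \<le> 1" using mult_mono[OF sx tk(2)[of k]] s0 x0 tk(1)[of k] by (simp add: a_def)
    have "b^2 = s^2 * y^2 * (t^k)^2" by (simp add: b_def power_mult_distrib)
    also have "\<dots> \<le> (1/100)^2 * 4 * 1"
      using s0 s1 y2 tk[of k] by (intro mult_mono power_mono) (auto simp: power_le_one)
    finally have b2: "b^2 \<le> 1/2500" by (simp add: power_divide)
    have "(cmod (1 - w k))^2 = (1-a)^2 + b^2" unfolding cmod_power2 ReIm by simp
    also have "\<dots> \<le> exp (-2*a - a^2/2 + 2*b^2)" by (rule term_bound[OF a0 a1 b2])
    also have "-2*a - a^2/2 + 2*b^2 = 2 * \<phi> k"
      by (simp add: \<phi>_def c1_def c2_def a_def b_def power_mult_distrib algebra_simps)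
    also have "exp (2 * \<phi> k) = (exp (\<phi> k))^2" by (simp add: power2_eq_square exp_add[symmetric])
    finally show ?thesis by (rule power2_le_imp_le) simp
  qed
  have \<phi>sums: "\<phi> sums (c1 * ((1+s)/(2 * s)) + c2 * ((1+s)^2/(4 * s)))"
    unfolding \<phi>_def using geo1[of s] geo2[of s] s0 s1 t_def'
    by (intro sums_add sums_mult) auto
  have conv: "convergent_prod (\<lambda>k. 1 - w k)"
  proof -
    have "summable (\<lambda>k. norm (- w (Suc k)))"
    proof -
      have "summable (\<lambda>k. s * cmod \<mu> * t * t^k)"
        using geo1[of s] s0 s1 t_def' by (intro summable_mult sums_summable) auto
      moreover have "norm (- w (Suc k)) = s * cmod \<mu> * t * t^k" for k
        using s0 t0 by (simp add: w_def norm_mult norm_power)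
      ultimately show ?thesis by simp
    qed
    moreover have "- w (Suc k) \<noteq> -1" for k
    proof
      assume "- w (Suc k) = -1"
      then have "Re (w (Suc k)) = 1" by (metis minus_equation_iff one_complex.simps(1) uminus_complex.sel(1) minus_minus)
      moreover have "Re (w (Suc k)) = s * x * (t * t^k)" by (simp add: w_def x_def)
      moreover have "t * t^k < 1" 
      proof -
        have "t * t^k \<le> t * 1" using tk(2)[of k] t0 by (rule mult_left_mono)
        then show ?thesis using t1 by simp
      qed
      moreover have "s * x * (t * t^k) \<le> 1 * (t * t^k)" using sx t0 tk[of k] by (intro mult_right_mono) auto
      ultimately show False by linarith
    qed
    ultimately have "convergent_prod (\<lambda>k. 1 + - w (Suc k))"
      by (intro summable_imp_convergent_prod_complex) auto
    then show ?thesis using convergent_prod_Suc_iff[of "\<lambda>k. 1 - w k"] by simp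
  qed
  have lim1: "(\<lambda>n. cmod (\<Prod>i\<le>n. 1 - w i)) \<longlonglongrightarrow> cmod (g \<epsilon> \<mu>)"
    unfolding g_eq by (intro tendsto_norm convergent_prod_LIMSEQ conv)
  have lim2: "(\<lambda>n. exp (\<Sum>i\<le>n. \<phi> i)) \<longlonglongrightarrow> exp (c1 * ((1+s)/(2 * s)) + c2 * ((1+s)^2/(4 * s)))"
    using \<phi>sums unfolding sums_def_le by (intro tendsto_exp)
  have le: "cmod (\<Prod>i\<le>n. 1 - w i) \<le> exp (\<Sum>i\<le>n. \<phi> i)" for n
  proof -
    have "cmod (\<Prod>i\<le>n. 1 - w i) = (\<Prod>i\<le>n. cmod (1 - w i))" by (simp add: prod_norm)
    also have "\<dots> \<le> (\<Prod>i\<le>n. exp (\<phi> i))" by (intro prod_mono) (auto intro: termb)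
    also have "\<dots> = exp (\<Sum>i\<le>n. \<phi> i)" by (simp add: exp_sum)
    finally show ?thesis .
  qed
  have "cmod (g \<epsilon> \<mu>) \<le> exp (c1 * ((1+s)/(2 * s)) + c2 * ((1+s)^2/(4 * s)))"
    by (rule LIMSEQ_le[OF lim1 lim2]) (use le in auto)
  then show ?thesis by (simp add: c1_def c2_def s_def x_def y_def)
qed



lemma final_ineq:
  fixes s x y :: real
  assumes s: "0 < s" "s \<le> 1/100" and x: "2 \<le> x" and y: "y^2 \<le> 4"
  shows "- (s * x) * ((1 + s)/(2 * s)) + ((s * y)^2 - (s * x)^2/4) * ((1 + s)^2/(4 * s))
         \<le> - x / 2 - (1/32 * s) * (x^2 - y^2)"
proof -
  define u where "u = (1+s)^2"
  have u1: "1 \<le> u" unfolding u_def using s by (intro one_le_power) simp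
  have "(1+s)^2 \<le> (101/100)^2" using s by (intro power_mono) auto
  then have u2: "u \<le> 103/100" by (simp add: u_def power_divide; linarith)
  have eq: "- (s * x) * ((1 + s)/(2 * s)) + ((s * y)^2 - (s * x)^2/4) * ((1 + s)^2/(4 * s))
      = - x / 2 + s * (- x / 2 + (y^2 - x^2/4) * u / 4)"
    using s by (simp add: u_def field_simps power2_eq_square)
  have A: "y^2 * u \<le> y^2 * (103/100)" using u2 by (intro mult_left_mono) auto
  have B: "x^2 \<le> x^2 * u" using mult_left_mono[OF u1, of "x^2"] by simp
  have x2: "0 \<le> x^2" by simp
  have L: "- x / 2 + (y^2 * u) / 4 - (x^2 * u) / 16 \<le> - (x^2) / 32 + y^2 / 32"
    using A B x x2 y by linarith
  have "- x / 2 + (y^2 - x^2/4) * u / 4 = - x / 2 + (y^2 * u) / 4 - (x^2 * u) / 16"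
    by (simp add: field_simps)
  also have "\<dots> \<le> - (x^2) / 32 + y^2 / 32" by (rule L)
  also have "\<dots> = - (1/32) * (x^2 - y^2)" by (simp add: field_simps)
  finally have "- x / 2 + (y^2 - x^2/4) * u / 4 \<le> - (1/32) * (x^2 - y^2)" .
  then have "s * (- x / 2 + (y^2 - x^2/4) * u / 4) \<le> s * (- (1/32) * (x^2 - y^2))"
    using s by (intro mult_left_mono) auto
  then show ?thesis unfolding eq by (simp add: algebra_simps)
qed

theorem lemma14:
  fixes r :: real
  assumes "r \<ge> 1"
  shows "compact (R1 r)
    \<and> (\<forall>\<epsilon>>0. Ctilde \<epsilon> \<subseteq> R1 r \<union> R2 r \<epsilon>)
    \<and> uniform_limit (R1 r) (\<lambda>\<epsilon> \<mu>. g \<epsilon> \<mu>) (\<lambda>\<mu>. exp (- \<mu> / 2)) (at_right 0)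
    \<and> (\<exists>\<epsilon>0>0. \<exists>c>0. \<forall>\<epsilon>. 0 < \<epsilon> \<and> \<epsilon> < \<epsilon>0 \<longrightarrow>
          (\<forall>\<mu>\<in>R2 r \<epsilon>. cmod (g \<epsilon> \<mu>)
              \<le> cmod (exp (- \<mu> / 2)) * cmod (exp (- complex_of_real (c * sqrt \<epsilon>) * \<mu>\<^sup>2))))"
proof -
  define S where "S = sin (pi/10)"
  define C where "C = cos (pi/10)"
  define M where "M = r / S"
  define K where "K = r / tan (pi/10)"
  have S0: "0 < S" and S1: "S \<le> 1" and C0: "4/5 \<le> C" using trig_facts by (auto simp: S_def C_def)
  have K_eq: "K = r * (C / S)" by (simp add: K_def tan_def S_def C_def)
  have CS: "2 \<le> C / S" using cot_ge2 by (simp add: S_def C_def)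
  have "r * 2 \<le> r * (C / S)" using CS assms by (intro mult_left_mono) auto
  then have K2: "2 * r \<le> K" unfolding K_eq by linarith
  have M0: "0 < M" using assms S0 by (simp add: M_def)
  have MK: "M^2 = K^2 + r^2"
  proof -
    have h: "C^2 + S^2 = 1" by (simp add: S_def C_def)
    have "K^2 + r^2 = r^2 * (C^2 + S^2) / S^2" using S0 unfolding K_eq by (simp add: field_simps power2_eq_square)
    also have "\<dots> = M^2" unfolding h by (simp add: M_def power_divide)
    finally show ?thesis by simp
  qed
  have inR1: "Complex a b \<in> R1 r" if "a^2 \<le> K^2" "b^2 \<le> 1" for a b
  proof -
    have "(cmod (Complex a b))^2 \<le> M^2"
      using that assms MK by (simp add: cmod_power2) (smt (verit) one_le_power)
    then have "cmod (Complex a b) \<le> M" using M0 by (meson less_imp_le power2_le_imp_le)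
    then show ?thesis by (simp add: R1_def M_def S_def)
  qed
  have R1c: "R1 r = cball 0 M" by (auto simp: R1_def M_def S_def)
  have P1: "compact (R1 r)" unfolding R1c by simp
  have P2: "Ctilde \<epsilon> \<subseteq> R1 r \<union> R2 r \<epsilon>" if e: "\<epsilon> > 0" for \<epsilon>
  proof
    fix z assume z: "z \<in> Ctilde \<epsilon>"
    have sp: "0 < sqrt \<epsilon>" using e by simp
    show "z \<in> R1 r \<union> R2 r \<epsilon>"
      using z unfolding Ctilde_def
    proof (elim UnE CollectE exE conjE)
      fix \<theta> assume "z = cis \<theta>"
      then have "cmod z \<le> M" using assms S0 S1 unfolding M_def
        by (simp add: le_divide_eq)
      then show ?thesis by (simp add: R1_def M_def S_def)
    next
      fix x s assume zz: "z = Complex x s" "s = 1 \<or> s = -1" "0 < x" "x \<le> 1 / sqrt \<epsilon> - 1"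
      show ?thesis
      proof (cases "x \<le> K")
        case True
        then have "x^2 \<le> K^2" using zz by (intro power_mono) auto
        moreover have "s^2 \<le> 1" using zz by auto
        ultimately show ?thesis using inR1 zz by auto
      next
        case False
        then show ?thesis using zz by (auto simp: R2_def K_def)
      qed
    next
      fix y assume zz: "z = Complex (1 / sqrt \<epsilon> - 1) y" "-1 < y" "y < 1"
      show ?thesis
      proof (cases "1 / sqrt \<epsilon> - 1 < K")
        case True
        have "-1 < 1 / sqrt \<epsilon> - 1" using sp by simp
        then have "\<bar>1 / sqrt \<epsilon> - 1\<bar> \<le> \<bar>K\<bar>" using True K2 assms by linarith
        then have "(1 / sqrt \<epsilon> - 1)^2 \<le> K^2" by (simp add: abs_le_square_iff)
        moreover have "y^2 \<le> 1" using zz by (simp add: abs_square_le_1)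
        ultimately show ?thesis using inR1 zz by auto
      next
        case False
        then show ?thesis using zz by (auto simp: R2_def K_def)
      qed
    qed
  qed
  have P3: "uniform_limit (R1 r) (\<lambda>\<epsilon> \<mu>. g \<epsilon> \<mu>) (\<lambda>\<mu>. exp (- \<mu> / 2)) (at_right 0)"
  proof (rule uniform_limitI)
    fix e :: real assume e: "0 < e"
    define K0 where "K0 = M/2 + 2 * M^2"
    have K00: "0 < K0" using M0 unfolding K0_def by (intro add_pos_nonneg) auto
    have "isCont exp (0::complex)" by (rule isCont_exp)
    then have "(exp :: complex \<Rightarrow> complex) \<midarrow>0\<rightarrow> 1" by (simp add: isCont_def)
    from LIM_D[OF this, of "e / exp (M/2)"] e
    obtain d where d: "d > 0" "\<And>z::complex. z \<noteq> 0 \<Longrightarrow> norm z < d \<Longrightarrow> norm (exp z - 1) < e / exp (M/2)"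
      by auto
    have dd: "norm (exp z - 1) < e / exp (M/2)" if "norm z < d" for z :: complex
      using d that e by (cases "z = 0") auto
    define q where "q = min (1/2) (min (1 / (2 * M)) (d / (2 * K0)))"
    have q0: "0 < q" using M0 K00 d by (simp add: q_def)
    have ev: "eventually (\<lambda>\<epsilon>. \<epsilon> \<in> {0<..<q^2}) (at_right (0::real))"
      using q0 by (intro eventually_at_right_real) simp
    show "\<forall>\<^sub>F \<epsilon> in at_right 0. \<forall>\<mu>\<in>R1 r. dist (g \<epsilon> \<mu>) (exp (- \<mu> / 2)) < e"
      using ev
    proof eventually_elim
      case (elim \<epsilon>)
      then have e0: "0 < \<epsilon>" "\<epsilon> < q^2" by auto
      have sq: "sqrt \<epsilon> < q" using e0 q0 by (metis real_sqrt_less_iff real_sqrt_abs abs_of_pos)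
      have sq1: "sqrt \<epsilon> \<le> 1/2" using sq by (simp add: q_def)
      have sq2: "sqrt \<epsilon> * M \<le> 1/2"
      proof -
        have "sqrt \<epsilon> \<le> 1 / (2 * M)" using sq by (simp add: q_def)
        then show ?thesis using M0 by (simp add: le_divide_eq)
      qed
      have sq3: "sqrt \<epsilon> * K0 < d"
      proof -
        have "sqrt \<epsilon> < d / (2 * K0)" using sq by (simp add: q_def)
        then have "sqrt \<epsilon> * K0 < d / 2" using K00 by (simp add: less_divide_eq)
        then show ?thesis using d by simp
      qed
      show ?case
      proof
        fix \<mu> assume mu: "\<mu> \<in> R1 r"
        then have muM: "cmod \<mu> \<le> M" by (simp add: R1_def M_def S_def)
        obtain z where z: "g \<epsilon> \<mu> = exp (- \<mu> / 2 + z)" "cmod z \<le> sqrt \<epsilon> * K0"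
          using g_approx[OF e0(1) sq1 sq2 muM] by (auto simp: K0_def)
        have nz: "norm z < d" using z(2) sq3 by simp
        have "dist (g \<epsilon> \<mu>) (exp (- \<mu> / 2)) = cmod (exp (- \<mu> / 2) * (exp z - 1))"
          unfolding z(1) dist_norm exp_add by (simp add: algebra_simps)
        also have "\<dots> = cmod (exp (- \<mu> / 2)) * cmod (exp z - 1)" by (rule norm_mult)
        also have "\<dots> \<le> exp (M/2) * cmod (exp z - 1)"
        proof (rule mult_right_mono)
          have "Re (- \<mu> / 2) \<le> M/2" using abs_Re_le_cmod[of \<mu>] muM by simp
          then show "cmod (exp (- \<mu> / 2)) \<le> exp (M/2)" by simp
        qed simp
        also have "\<dots> < exp (M/2) * (e / exp (M/2))"
          by (intro mult_strict_left_mono dd nz) simp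
        also have "\<dots> = e" by simp
        finally show "dist (g \<epsilon> \<mu>) (exp (- \<mu> / 2)) < e" .
      qed
    qed
  qed
  have P4: "\<exists>\<epsilon>0>0. \<exists>c>0. \<forall>\<epsilon>. 0 < \<epsilon> \<and> \<epsilon> < \<epsilon>0 \<longrightarrow>
          (\<forall>\<mu>\<in>R2 r \<epsilon>. cmod (g \<epsilon> \<mu>)
              \<le> cmod (exp (- \<mu> / 2)) * cmod (exp (- complex_of_real (c * sqrt \<epsilon>) * \<mu>\<^sup>2)))"
  proof -
  have main: "\<forall>\<epsilon>. 0 < \<epsilon> \<and> \<epsilon> < (1/100::real)^2 \<longrightarrow>
          (\<forall>\<mu>\<in>R2 r \<epsilon>. cmod (g \<epsilon> \<mu>)
              \<le> cmod (exp (- \<mu> / 2)) * cmod (exp (- complex_of_real (1/32 * sqrt \<epsilon>) * \<mu>\<^sup>2)))"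
  proof (intro allI impI ballI)
    fix \<epsilon> \<mu> assume e: "0 < \<epsilon> \<and> \<epsilon> < (1/100::real)^2" and mu: "\<mu> \<in> R2 r \<epsilon>"
    have sq: "sqrt \<epsilon> < 1/100" using e by (metis real_sqrt_less_iff real_sqrt_abs abs_of_pos zero_less_divide_1_iff zero_less_numeral)
    have sp: "0 < sqrt \<epsilon>" using e by simp
    have x: "K \<le> Re \<mu>" "Re \<mu> \<le> 1 / sqrt \<epsilon>" and y: "-2 \<le> Im \<mu>" "Im \<mu> \<le> 2"
      using mu by (auto simp: R2_def K_def)
    have x2: "2 \<le> Re \<mu>" using x K2 assms by linarith
    have y2: "(Im \<mu>)^2 \<le> 4" using abs_le_square_iff[of "Im \<mu>" 2] y by (simp add: abs_le_iff)
    have "cmod (g \<epsilon> \<mu>) \<le> exp (- (sqrt \<epsilon> * Re \<mu>) * ((1 + sqrt \<epsilon>)/(2 * sqrt \<epsilon>))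
             + ((sqrt \<epsilon> * Im \<mu>)^2 - (sqrt \<epsilon> * Re \<mu>)^2/4) * ((1 + sqrt \<epsilon>)^2/(4 * sqrt \<epsilon>)))"
      using e sq x x2 y by (intro g_R2) auto
    also have "\<dots> \<le> exp (- Re \<mu> / 2 - (1/32 * sqrt \<epsilon>) * ((Re \<mu>)^2 - (Im \<mu>)^2))"
      using final_ineq[OF sp _ x2 y2] sq by simp
    also have "\<dots> = cmod (exp (- \<mu> / 2)) * cmod (exp (- complex_of_real (1/32 * sqrt \<epsilon>) * \<mu>\<^sup>2))"
    proof -
      have "Re (- complex_of_real (1/32 * sqrt \<epsilon>) * \<mu>\<^sup>2) = - (1/32 * sqrt \<epsilon>) * ((Re \<mu>)^2 - (Im \<mu>)^2)"
        by (simp add: Re_power2)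
      moreover have "Re (- \<mu> / 2) = - Re \<mu> / 2" by simp
      ultimately show ?thesis by (simp only: norm_exp_eq_Re exp_add[symmetric]) simp
    qed
    finally show "cmod (g \<epsilon> \<mu>) \<le> cmod (exp (- \<mu> / 2)) * cmod (exp (- complex_of_real (1/32 * sqrt \<epsilon>) * \<mu>\<^sup>2))" .
  qed
  show ?thesis
    apply (rule exI[of _ "(1/100::real)^2"])
    apply (rule conjI, simp)
    apply (rule exI[of _ "1/32::real"])
    apply (rule conjI, simp)
    by (rule main)
  qed
  show ?thesis using P1 P2 P3 P4 by blast
qed


end
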